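(* For integers $r,s\ge0$ and $(a,b)\in\mathbb{Z}^2$, let $W_r(a,b)$ be the number of $r$-step nearest-neighbour walks in $\mathbb{Z}^2$ from $0$ to $(a,b)$, and let $W_{r,s}$ be the minimum of $W_r(a,b)$ over all $(a,b)$ with $|a|+|b|\le s$ and $a+b\equiv s \pmod 2$. Then for any even $\tau>0$ and $p\in[0,1]$, \[ R_\tau(p) \ge \sum_{k=0}^{\tau/2}\ \sum_{r+s=2k} \binom{r+s}{r}(1-p)^s\left(\frac{p}{4}\right)^r W_{r,s}. \] In particular, \[ R_4(p) = 1 + \frac{1}{4}p^2+\frac{1}{2}p(1-p) + \frac{9}{64}p^{4}+ \frac{9}{16}p^{3}(1-p)+\frac{3}{8} p^2(1-p)^2 . \]
   Context: A sequence of instructions is an infinite walk $(x_t)_{t\ge 0}$ in $\mathbb{Z}^2$ with $x_0=0$ and $x_{t+1}-x_t\in\{(\pm1,0),(0,\pm1)\}$. The guided random walk with error probability $p$ following it is the Markov chain $(X_t)_{t\ge0}$ with $X_0=0$ and independent increments, $X_{t+1}-X_t = x_{t+1}-x_t$ with probability $1-p$, and $X_{t+1}-X_t$ uniformly distributed on $\{(\pm1,0),(0,\pm1)\}$ with probability $p$. For a positive integer $\tau$, $R_\tau(p) := \min \mathbb{E}[\#\{t\in\{0,1,\dots,\tau\} : X_t = 0\}]$, the minimum being over all sequences of instructions. *)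

theory Defs
  imports "HOL-Probability.Probability"
begin

type_synonym pt = "int \<times> int"

definition padd :: "pt \<Rightarrow> pt \<Rightarrow> pt" where
  "padd u v = (fst u + fst v, snd u + snd v)"

definition psub :: "pt \<Rightarrow> pt \<Rightarrow> pt" where
  "psub u v = (fst u - fst v, snd u - snd v)"

definition dirs :: "pt set" where
  "dirs = {(1,0), (-1,0), (0,1), (0,-1)}"

definition instructions :: "(nat \<Rightarrow> pt) set" where
  "instructions = {x. x 0 = (0,0) \<and> (\<forall>t. psub (x (Suc t)) (x t) \<in> dirs)}"

definition step_pmf :: "real \<Rightarrow> pt \<Rightarrow> pt pmf" where
  "step_pmf p d = bind_pmf (bernoulli_pmf p)
      (\<lambda>err. if err then pmf_of_set dirs else return_pmf d)"

primrec walk_path :: "real \<Rightarrow> (nat \<Rightarrow> pt) \<Rightarrow> nat \<Rightarrow> pt list pmf" where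
  "walk_path p x 0 = return_pmf [(0,0)]"
| "walk_path p x (Suc t) = bind_pmf (walk_path p x t)
      (\<lambda>ys. map_pmf (\<lambda>s. ys @ [padd (last ys) s]) (step_pmf p (psub (x (Suc t)) (x t))))"

definition visits :: "real \<Rightarrow> (nat \<Rightarrow> pt) \<Rightarrow> nat \<Rightarrow> real" where
  "visits p x \<tau> = measure_pmf.expectation (walk_path p x \<tau>)
      (\<lambda>ys. real (card {t. t \<le> \<tau> \<and> ys ! t = (0,0)}))"

text \<open>R_tau(p): minimum over all sequences of instructions (the infimum is attained).\<close>
definition R :: "nat \<Rightarrow> real \<Rightarrow> real" where
  "R \<tau> p = (INF x\<in>instructions. visits p x \<tau>)"

definition walk_end :: "pt list \<Rightarrow> pt" where
  "walk_end ws = foldr padd ws (0,0)"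

definition W :: "nat \<Rightarrow> pt \<Rightarrow> nat" where
  "W r ab = card {ws. length ws = r \<and> set ws \<subseteq> dirs \<and> walk_end ws = ab}"

definition Wrs :: "nat \<Rightarrow> nat \<Rightarrow> nat" where
  "Wrs r s = Min (W r ` {(a,b). \<bar>a\<bar> + \<bar>b\<bar> \<le> int s \<and> (a + b) mod 2 = int s mod 2})"

end

theory Submission
  imports Defs
begin

lemma padd_eq: "padd = (+)"
  by (auto simp: fun_eq_iff padd_def plus_prod_def)
lemma psub_eq: "psub = (-)"
  by (auto simp: fun_eq_iff psub_def minus_prod_def)

lemma finite_dirs: "finite dirs" and card_dirs: "card dirs = 4" and dirs_ne: "dirs \<noteq> {}"
  by (auto simp: dirs_def)

definition WS :: "nat \<Rightarrow> pt \<Rightarrow> pt list set" where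
  "WS r z = {ws. length ws = r \<and> set ws \<subseteq> dirs \<and> walk_end ws = z}"

lemma walk_end_Cons: "walk_end (e # ws) = e + walk_end ws"
  by (simp add: walk_end_def padd_eq)

lemma finite_WS: "finite (WS r z)"
proof -
  have "WS r z \<subseteq> {ws. set ws \<subseteq> dirs \<and> length ws = r}" by (auto simp: WS_def)
  thus ?thesis using finite_lists_length_eq[OF finite_dirs] finite_subset by blast
qed

lemma WS_Suc: "WS (Suc r) z = (\<Union>e\<in>dirs. (Cons e) ` WS r (z - e))"
proof safe
  fix ws assume "ws \<in> WS (Suc r) z"
  then obtain e ws' where "ws = e # ws'" by (cases ws) (auto simp: WS_def)
  with \<open>ws \<in> WS (Suc r) z\<close> show "ws \<in> (\<Union>e\<in>dirs. (Cons e) ` WS r (z - e))"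
    by (auto simp: WS_def walk_end_Cons algebra_simps)
qed (auto simp: WS_def walk_end_Cons)

lemma W_WS: "W r z = card (WS r z)" by (simp add: W_def WS_def)

lemma W_Suc: "W (Suc r) z = (\<Sum>e\<in>dirs. W r (z - e))"
  unfolding W_WS WS_Suc
  apply (subst card_UN_disjoint)
  by (auto simp: finite_dirs finite_WS card_image)

lemma W_0: "W 0 z = (if z = (0,0) then 1 else 0)"
proof -
  have "{ws. length ws = 0 \<and> set ws \<subseteq> dirs \<and> walk_end ws = z} = (if z = (0,0) then {[]} else {})"
    by (auto simp: walk_end_def)
  thus ?thesis by (simp add: W_def)
qed

lemma W_Suc': "W (Suc r) (a,b) = W r (a-1,b) + W r (a+1,b) + W r (a,b-1) + W r (a,b+1)"
  by (simp add: W_Suc dirs_def)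


primrec rwk :: "nat \<Rightarrow> pt pmf" where
  "rwk 0 = return_pmf 0"
| "rwk (Suc r) = bind_pmf (pmf_of_set dirs) (\<lambda>e. map_pmf ((+) e) (rwk r))"

lemma pmf_map_add: "pmf (map_pmf ((+) (e::pt)) M) z = pmf M (z - e)"
proof -
  have "pmf (map_pmf ((+) e) M) (e + (z - e)) = pmf M (z - e)"
    by (rule pmf_map_inj') (auto simp: inj_def)
  thus ?thesis by simp
qed

lemma pmf_rwk: "pmf (rwk r) z = real (W r z) / 4^r"
proof (induction r arbitrary: z)
  case 0
  then show ?case by (simp add: W_0 zero_prod_def indicator_def)
next
  case (Suc r)
  have "pmf (rwk (Suc r)) z = (\<Sum>e\<in>dirs. pmf (rwk r) (z - e)) / 4"
    by (simp add: pmf_bind_pmf_of_set finite_dirs dirs_ne card_dirs pmf_map_add)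
  also have "\<dots> = (\<Sum>e\<in>dirs. real (W r (z - e))) / 4^Suc r"
    by (simp add: Suc sum_divide_distrib mult.commute)
  also have "\<dots> = real (W (Suc r) z) / 4^Suc r"
    by (simp add: W_Suc)
  finally show ?case .
qed

primrec pos :: "real \<Rightarrow> (nat \<Rightarrow> pt) \<Rightarrow> nat \<Rightarrow> pt pmf" where
  "pos p x 0 = return_pmf 0"
| "pos p x (Suc t) = bind_pmf (pos p x t) (\<lambda>z. map_pmf ((+) z) (step_pmf p (x (Suc t) - x t)))"

lemma walk_path_length: "ys \<in> set_pmf (walk_path p x t) \<Longrightarrow> length ys = Suc t"
  by (induction t arbitrary: ys) auto

lemma walk_path_nth: "t \<le> n \<Longrightarrow> map_pmf (\<lambda>ys. ys ! t) (walk_path p x n) = pos p x t"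
proof (induction n arbitrary: t)
  case 0
  then show ?case by (simp add: zero_prod_def)
next
  case (Suc n)
  show ?case
  proof (cases "t \<le> n")
    case True
    have "map_pmf (\<lambda>ys. ys ! t) (walk_path p x (Suc n)) =
          bind_pmf (walk_path p x n) (\<lambda>ys. return_pmf (ys ! t))"
      apply (simp add: map_bind_pmf pmf.map_comp o_def)
      apply (rule bind_pmf_cong, simp)
      using True walk_path_length by (simp add: nth_append)
    also have "\<dots> = pos p x t" using Suc.IH[OF True] by (simp add: map_pmf_def)
    finally show ?thesis .
  next
    case False
    hence t: "t = Suc n" using Suc.prems by simp
    have "map_pmf (\<lambda>ys. ys ! t) (walk_path p x (Suc n)) =
          bind_pmf (walk_path p x n) (\<lambda>ys. map_pmf ((+) (ys ! n)) (step_pmf p (x (Suc n) - x n)))"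
      apply (simp add: map_bind_pmf pmf.map_comp o_def t)
      apply (rule bind_pmf_cong, simp)
      subgoal for ys
      proof -
        assume "ys \<in> set_pmf (walk_path p x n)"
        hence l: "length ys = Suc n" by (rule walk_path_length)
        hence "ys \<noteq> []" by auto
        hence "last ys = ys ! n" using l by (simp add: last_conv_nth)
        thus ?thesis using l by (simp add: nth_append padd_eq psub_eq)
      qed
      done
    also have "\<dots> = bind_pmf (map_pmf (\<lambda>ys. ys ! n) (walk_path p x n)) (\<lambda>z. map_pmf ((+) z) (step_pmf p (x (Suc n) - x n)))"
      by (simp add: bind_map_pmf)
    also have "\<dots> = pos p x t" using Suc.IH[of n] t by simp
    finally show ?thesis .
  qed
qed


lemma visits_eq: "visits p x \<tau> = (\<Sum>t\<le>\<tau>. pmf (pos p x t) 0)"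
proof -
  have card: "real (card {t. t \<le> \<tau> \<and> ys ! t = (0,0)}) = (\<Sum>t\<le>\<tau>. indicator {0} (ys ! t))" for ys :: "pt list"
  proof -
    have e: "{t. t \<le> \<tau> \<and> ys ! t = (0,0)} = {..\<tau>} \<inter> {t. ys ! t = 0}"
      by (auto simp: zero_prod_def)
    have "(\<Sum>t\<le>\<tau>. indicator {0} (ys ! t) :: real) = (\<Sum>t\<le>\<tau>. indicator {t. ys ! t = 0} t)"
      by (rule sum.cong) (auto simp: indicator_def)
    also have "\<dots> = (\<Sum>t\<in>{..\<tau>} \<inter> {t. ys ! t = 0}. 1::real)"
      by (simp add: sum.inter_restrict indicator_def)
    also have "\<dots> = real (card ({..\<tau>} \<inter> {t. ys ! t = 0}))" by simp
    finally show ?thesis by (simp only: e)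
  qed
  have "visits p x \<tau> = (\<Sum>t\<le>\<tau>. measure_pmf.expectation (walk_path p x \<tau>) (\<lambda>ys. indicator {0} (ys ! t)))"
    unfolding visits_def card
    by (rule Bochner_Integration.integral_sum) (rule measure_pmf.integrable_const_bound[where B=1], auto simp: indicator_def)
  also have "\<dots> = (\<Sum>t\<le>\<tau>. pmf (pos p x t) 0)"
  proof (rule sum.cong, simp)
    fix t assume "t \<in> {..\<tau>}"
    hence "measure_pmf.expectation (walk_path p x \<tau>) (\<lambda>ys. indicator {0} (ys ! t) :: real)
       = measure_pmf.expectation (map_pmf (\<lambda>ys. ys ! t) (walk_path p x \<tau>)) (indicator {0} :: pt \<Rightarrow> real)"
      by (subst integral_map_pmf) (rule refl)
    also have "\<dots> = pmf (pos p x t) 0" using \<open>t \<in> {..\<tau>}\<close>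
      by (simp add: walk_path_nth measure_pmf_single)
    finally show "measure_pmf.expectation (walk_path p x \<tau>) (\<lambda>ys. indicator {0} (ys ! t) :: real) = pmf (pos p x t) 0" .
  qed
  finally show ?thesis .
qed

primrec Q :: "real \<Rightarrow> (nat \<Rightarrow> pt) \<Rightarrow> nat \<Rightarrow> (nat \<times> pt) pmf" where
  "Q p x 0 = return_pmf (0, 0)"
| "Q p x (Suc t) = bind_pmf (Q p x t) (\<lambda>(r,S). map_pmf (\<lambda>b. if b then (Suc r, S) else (r, S + (x (Suc t) - x t))) (bernoulli_pmf p))"

lemma step_key:
  "bind_pmf (rwk r) (\<lambda>w. map_pmf ((+) (S+w)) (step_pmf p d)) =
   bind_pmf (bernoulli_pmf p) (\<lambda>b. if b then map_pmf ((+) S) (rwk (Suc r)) else map_pmf ((+) (S+d)) (rwk r))"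
proof -
  have "bind_pmf (rwk r) (\<lambda>w. map_pmf ((+) (S+w)) (step_pmf p d)) =
     bind_pmf (rwk r) (\<lambda>w. bind_pmf (bernoulli_pmf p) (\<lambda>b. map_pmf ((+) (S+w)) (if b then pmf_of_set dirs else return_pmf d)))"
    by (simp add: step_pmf_def map_bind_pmf)
  also have "\<dots> = bind_pmf (bernoulli_pmf p) (\<lambda>b. bind_pmf (rwk r) (\<lambda>w. map_pmf ((+) (S+w)) (if b then pmf_of_set dirs else return_pmf d)))"
    by (rule bind_commute_pmf)
  also have "\<dots> = bind_pmf (bernoulli_pmf p) (\<lambda>b. if b then map_pmf ((+) S) (rwk (Suc r)) else map_pmf ((+) (S+d)) (rwk r))"
  proof (rule bind_pmf_cong, simp)
    fix b show "bind_pmf (rwk r) (\<lambda>w. map_pmf ((+) (S+w)) (if b then pmf_of_set dirs else return_pmf d)) =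
      (if b then map_pmf ((+) S) (rwk (Suc r)) else map_pmf ((+) (S+d)) (rwk r))"
    proof (cases b)
      case True
      have "bind_pmf (rwk r) (\<lambda>w. map_pmf ((+) (S+w)) (pmf_of_set dirs)) =
            bind_pmf (rwk r) (\<lambda>w. bind_pmf (pmf_of_set dirs) (\<lambda>e. return_pmf (S+e+w)))"
        by (simp add: map_pmf_def add_ac)
      also have "\<dots> = bind_pmf (pmf_of_set dirs) (\<lambda>e. bind_pmf (rwk r) (\<lambda>w. return_pmf (S+e+w)))"
        by (rule bind_commute_pmf)
      also have "\<dots> = map_pmf ((+) S) (rwk (Suc r))"
        by (simp add: map_pmf_def bind_assoc_pmf bind_return_pmf add_ac)
      finally show ?thesis using True by simp
    next
      case False
      then show ?thesis by (simp add: map_pmf_def bind_return_pmf add_ac)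
    qed
  qed
  finally show ?thesis .
qed

lemma pos_Q: "pos p x t = bind_pmf (Q p x t) (\<lambda>(r,S). map_pmf ((+) S) (rwk r))"
proof (induction t)
  case 0
  then show ?case by (simp add: bind_return_pmf)
next
  case (Suc t)
  let ?d = "x (Suc t) - x t"
  have "pos p x (Suc t) = bind_pmf (Q p x t) (\<lambda>rs. bind_pmf (rwk (fst rs)) (\<lambda>w. map_pmf ((+) (snd rs+w)) (step_pmf p ?d)))"
    by (simp add: Suc bind_assoc_pmf bind_map_pmf split_beta)
  also have "\<dots> = bind_pmf (Q p x t) (\<lambda>rs. bind_pmf (bernoulli_pmf p) (\<lambda>b. if b then map_pmf ((+) (snd rs)) (rwk (Suc (fst rs))) else map_pmf ((+) (snd rs+?d)) (rwk (fst rs))))"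
    by (simp only: step_key)
  also have "\<dots> = bind_pmf (Q p x (Suc t)) (\<lambda>(r,S). map_pmf ((+) S) (rwk r))"
    by (simp add: bind_assoc_pmf bind_map_pmf split_beta if_distrib del: rwk.simps cong: if_cong)
  finally show ?case .
qed

lemma Q_fst: assumes "p \<in> {0..1}" shows "map_pmf fst (Q p x t) = binomial_pmf t p"
proof (induction t)
  case 0
  then show ?case using assms by (simp add: binomial_pmf_0)
next
  case (Suc t)
  have "map_pmf fst (Q p x (Suc t)) = bind_pmf (map_pmf fst (Q p x t)) (\<lambda>r. map_pmf (\<lambda>b. if b then Suc r else r) (bernoulli_pmf p))"
    apply (simp add: map_bind_pmf bind_map_pmf pmf.map_comp o_def split_beta)
    apply (rule bind_pmf_cong, simp, rule pmf.map_cong)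
    by auto
  also have "\<dots> = bind_pmf (binomial_pmf t p) (\<lambda>r. map_pmf (\<lambda>b. if b then Suc r else r) (bernoulli_pmf p))"
    by (simp only: Suc)
  also have "\<dots> = bind_pmf (binomial_pmf t p) (\<lambda>k. bind_pmf (bernoulli_pmf p) (\<lambda>b. return_pmf ((if b then 1 else 0) + k)))"
    by (rule bind_pmf_cong) (auto simp: map_pmf_def intro!: bind_pmf_cong)
  also have "\<dots> = binomial_pmf (Suc t) p"
    by (subst binomial_pmf_Suc[OF assms], rule bind_commute_pmf)
  finally show ?case .
qed

lemma Q_finite: "finite (set_pmf (Q p x t))"
  by (induction t) (auto simp: split_beta)

lemma instr_dir: "x \<in> instructions \<Longrightarrow> x (Suc t) - x t \<in> dirs"
  by (simp add: instructions_def psub_eq)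

lemma Q_support:
  assumes "x \<in> instructions"
  shows "rs \<in> set_pmf (Q p x t) \<Longrightarrow> fst rs \<le> t \<and> \<bar>fst (snd rs)\<bar> + \<bar>snd (snd rs)\<bar> \<le> int (t - fst rs)
     \<and> (fst (snd rs) + snd (snd rs)) mod 2 = int (t - fst rs) mod 2"
proof (induction t arbitrary: rs)
  case 0
  then show ?case by (simp add: zero_prod_def)
next
  case (Suc t)
  from Suc.prems obtain r S b where rs: "(r,S) \<in> set_pmf (Q p x t)"
    and eq: "rs = (if b then (Suc r, S) else (r, S + (x (Suc t) - x t)))"
    by (auto simp: split_beta)
  have IH: "r \<le> t \<and> \<bar>fst S\<bar> + \<bar>snd S\<bar> \<le> int (t - r) \<and> (fst S + snd S) mod 2 = int (t - r) mod 2"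
    using Suc.IH[OF rs] by (simp only: fst_conv snd_conv)
  have d: "x (Suc t) - x t \<in> dirs" using assms by (rule instr_dir)
  define n where "n = int (t - r)"
  have n1: "int (Suc t - r) = n + 1" using IH by (simp add: n_def)
  obtain a b' where S: "S = (a, b')" by (cases S)
  obtain da db where dd: "x (Suc t) - x t = (da, db)" by (cases "x (Suc t) - x t")
  have dab: "\<bar>da\<bar> + \<bar>db\<bar> = 1" "(da + db) mod 2 = 1" using d dd by (auto simp: dirs_def)
  have IH': "\<bar>a\<bar> + \<bar>b'\<bar> \<le> n" "(a + b') mod 2 = n mod 2" using IH S n_def by auto
  have A: "\<bar>a + da\<bar> + \<bar>b' + db\<bar> \<le> n + 1" using IH'(1) dab(1) by arith
  have B: "(a + da + (b' + db)) mod 2 = (n + 1) mod 2" using IH'(2) dab(2) by presburger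
  show ?case
  proof (cases b)
    case True
    have "rs = (Suc r, (a,b'))" using eq True S by simp
    moreover have "int (Suc t - Suc r) = n" by (simp add: n_def)
    ultimately show ?thesis using IH IH' by simp
  next
    case False
    then show ?thesis using IH eq A B n1 S dd by (simp add: plus_prod_def, metis add.commute add_diff_eq)
  qed
qed

lemma neg_mod2: "(- x) mod 2 = (x::int) mod 2" by presburger

lemma pmf_pos0: "pmf (pos p x t) 0 = measure_pmf.expectation (Q p x t) (\<lambda>rs. real (W (fst rs) (0 - snd rs)) / 4 ^ fst rs)"
  by (simp add: pos_Q pmf_bind split_beta pmf_map_add pmf_rwk)

lemma integral_Q_fst:
  assumes "p \<in> {0..1}"
  shows "measure_pmf.expectation (Q p x t) (\<lambda>rs. g (fst rs) :: real) = (\<Sum>r\<le>t. g r * pmf (binomial_pmf t p) r)"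
proof -
  have "measure_pmf.expectation (Q p x t) (\<lambda>rs. g (fst rs)) = measure_pmf.expectation (map_pmf fst (Q p x t)) g"
    by simp
  also have "\<dots> = measure_pmf.expectation (binomial_pmf t p) g" by (simp only: Q_fst[OF assms])
  also have "\<dots> = (\<Sum>r\<le>t. g r * pmf (binomial_pmf t p) r)"
    by (rule integral_measure_pmf_real) (use assms in \<open>auto simp: set_pmf_binomial_eq split: if_splits\<close>)
  finally show ?thesis .
qed

lemma finite_box: "finite {(a,b). \<bar>a\<bar> + \<bar>b\<bar> \<le> int s \<and> (a + b) mod 2 = int s mod 2 :: bool}"
proof -
  have "{(a,b). \<bar>a\<bar> + \<bar>b\<bar> \<le> int s \<and> (a + b) mod 2 = int s mod 2 :: bool} \<subseteq> {-int s..int s} \<times> {-int s..int s}"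
    by (auto simp: abs_le_iff)
  thus ?thesis by (rule finite_subset) simp
qed

lemma Wrs_le: assumes "\<bar>a\<bar> + \<bar>b\<bar> \<le> int s" "(a + b) mod 2 = int s mod 2"
  shows "Wrs r s \<le> W r (a,b)"
  unfolding Wrs_def by (rule Min_le) (use assms finite_box in auto)

lemma pos_lower:
  assumes "x \<in> instructions" "p \<in> {0..1}"
  shows "pmf (pos p x t) 0 \<ge> (\<Sum>r\<le>t. real (Wrs r (t - r)) / 4 ^ r * pmf (binomial_pmf t p) r)"
proof -
  have "(\<Sum>r\<le>t. real (Wrs r (t - r)) / 4 ^ r * pmf (binomial_pmf t p) r) =
     measure_pmf.expectation (Q p x t) (\<lambda>rs. real (Wrs (fst rs) (t - fst rs)) / 4 ^ fst rs)"
    by (rule integral_Q_fst[OF assms(2), symmetric])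
  also have "\<dots> \<le> measure_pmf.expectation (Q p x t) (\<lambda>rs. real (W (fst rs) (0 - snd rs)) / 4 ^ fst rs)"
  proof (rule integral_mono_AE)
    show "integrable (measure_pmf (Q p x t)) (\<lambda>rs. real (Wrs (fst rs) (t - fst rs)) / 4 ^ fst rs)"
      by (rule integrable_measure_pmf_finite[OF Q_finite])
    show "integrable (measure_pmf (Q p x t)) (\<lambda>rs. real (W (fst rs) (0 - snd rs)) / 4 ^ fst rs)"
      by (rule integrable_measure_pmf_finite[OF Q_finite])
    show "AE rs in measure_pmf (Q p x t). real (Wrs (fst rs) (t - fst rs)) / 4 ^ fst rs \<le> real (W (fst rs) (0 - snd rs)) / 4 ^ fst rs"
      unfolding AE_measure_pmf_iff
    proof
      fix rs assume "rs \<in> set_pmf (Q p x t)"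
      from Q_support[OF assms(1) this] have h0: "\<bar>fst (snd rs)\<bar> + \<bar>snd (snd rs)\<bar> \<le> int (t - fst rs)"
         "(fst (snd rs) + snd (snd rs)) mod 2 = int (t - fst rs) mod 2" by blast+
      have h: "\<bar>- fst (snd rs)\<bar> + \<bar>- snd (snd rs)\<bar> \<le> int (t - fst rs)"
         "(- fst (snd rs) + - snd (snd rs)) mod 2 = int (t - fst rs) mod 2"
        using h0(1) apply (simp only: abs_minus_cancel)
        using h0(2) neg_mod2[of "fst (snd rs) + snd (snd rs)"] by (simp only: minus_add_distrib)
      have "0 - snd rs = (- fst (snd rs), - snd (snd rs))" by (simp add: zero_prod_def minus_prod_def)
      hence "Wrs (fst rs) (t - fst rs) \<le> W (fst rs) (0 - snd rs)" using Wrs_le[OF h] by simp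
      thus "real (Wrs (fst rs) (t - fst rs)) / 4 ^ fst rs \<le> real (W (fst rs) (0 - snd rs)) / 4 ^ fst rs"
        by (simp add: divide_right_mono)
    qed
  qed
  also have "\<dots> = pmf (pos p x t) 0" by (simp add: pmf_pos0)
  finally show ?thesis .
qed

definition LB :: "nat \<Rightarrow> real \<Rightarrow> real" where
  "LB \<tau> p = (\<Sum>k=0..\<tau> div 2. \<Sum>r=0..2*k.
            real ((2*k) choose r) * (1-p)^(2*k-r) * (p/4)^r * real (Wrs r (2*k-r)))"

lemma visits_nonneg: "visits p x \<tau> \<ge> 0"
  by (simp add: visits_eq sum_nonneg)

lemma visits_lower:
  assumes "x \<in> instructions" "0 \<le> p" "p \<le> 1"
  shows "visits p x \<tau> \<ge> LB \<tau> p"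
proof -
  have p01: "p \<in> {0..1}" using assms by simp
  have "LB \<tau> p = (\<Sum>k=0..\<tau> div 2. \<Sum>r\<le>2*k. real (Wrs r (2*k - r)) / 4 ^ r * pmf (binomial_pmf (2*k) p) r)"
    unfolding LB_def
    apply (rule sum.cong, simp)
    apply (subst atMost_atLeast0)
    apply (rule sum.cong, simp)
    using assms(2,3) by (simp add: pmf_binomial power_divide field_simps)
  also have "\<dots> \<le> (\<Sum>k=0..\<tau> div 2. pmf (pos p x (2*k)) 0)"
    by (rule sum_mono) (rule pos_lower[OF assms(1) p01])
  also have "\<dots> = (\<Sum>t\<in>(\<lambda>k. 2*k) ` {0..\<tau> div 2}. pmf (pos p x t) 0)"
    by (subst sum.reindex) (auto simp: inj_on_def)
  also have "\<dots> \<le> (\<Sum>t\<le>\<tau>. pmf (pos p x t) 0)"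
    by (rule sum_mono2) auto
  also have "\<dots> = visits p x \<tau>" by (simp add: visits_eq)
  finally show ?thesis .
qed

definition x0 :: "nat \<Rightarrow> pt" where "x0 t = (int t, 0)"

lemma x0_instr: "x0 \<in> instructions"
  by (simp add: instructions_def x0_def psub_def dirs_def)

lemma R_lower:
  assumes "0 \<le> p" "p \<le> 1"
  shows "R \<tau> p \<ge> LB \<tau> p"
  unfolding R_def
  by (rule cINF_greatest) (use x0_instr visits_lower assms in auto)

lemma R_upper: "R \<tau> p \<le> visits p x0 \<tau>"
  unfolding R_def
  by (rule cINF_lower) (auto intro!: bdd_belowI[where m=0] simp: visits_nonneg x0_instr)

lemma Q_x0_support: "rs \<in> set_pmf (Q p x0 t) \<Longrightarrow> fst rs \<le> t \<and> snd rs = (int (t - fst rs), 0)"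
proof (induction t arbitrary: rs)
  case 0
  then show ?case by (simp add: zero_prod_def)
next
  case (Suc t)
  from Suc.prems obtain r S b where rs: "(r,S) \<in> set_pmf (Q p x0 t)"
    and eq: "rs = (if b then (Suc r, S) else (r, S + (x0 (Suc t) - x0 t)))"
    by (auto simp: split_beta)
  have IH: "r \<le> t" "S = (int (t - r), 0)" using Suc.IH[OF rs] by auto
  show ?case
    using IH eq by (cases b) (auto simp: x0_def plus_prod_def minus_prod_def of_nat_diff)
qed

lemma pos_x0:
  assumes "0 \<le> p" "p \<le> 1"
  shows "pmf (pos p x0 t) 0 = (\<Sum>r\<le>t. real (W r (- int (t - r), 0)) / 4 ^ r * pmf (binomial_pmf t p) r)"
proof -
  have "pmf (pos p x0 t) 0 = measure_pmf.expectation (Q p x0 t) (\<lambda>rs. real (W (fst rs) (0 - snd rs)) / 4 ^ fst rs)"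
    by (rule pmf_pos0)
  also have "\<dots> = measure_pmf.expectation (Q p x0 t) (\<lambda>rs. real (W (fst rs) (- int (t - fst rs), 0)) / 4 ^ fst rs)"
    by (rule integral_cong_AE) (auto simp: AE_measure_pmf_iff zero_prod_def minus_prod_def dest!: Q_x0_support)
  also have "\<dots> = (\<Sum>r\<le>t. real (W r (- int (t - r), 0)) / 4 ^ r * pmf (binomial_pmf t p) r)"
    by (rule integral_Q_fst) (use assms in simp)
  finally show ?thesis .
qed

lemma visits_x0:
  assumes "0 \<le> p" "p \<le> 1"
  shows "visits p x0 4 = 1 + 1/4*p^2 + 1/2*p*(1-p) + 9/64*p^4 + 9/16*p^3*(1-p) + 3/8*p^2*(1-p)^2"
proof -
  have "visits p x0 4 = (\<Sum>t\<le>4. \<Sum>r\<le>t. real (W r (- int (t - r), 0)) / 4 ^ r * ((t choose r) * p^r * (1-p)^(t-r)))"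
    by (simp add: visits_eq pos_x0 assms pmf_binomial)
  also have "\<dots> = 1 + 1/4*p^2 + 1/2*p*(1-p) + 9/64*p^4 + 9/16*p^3*(1-p) + 3/8*p^2*(1-p)^2"
    by (simp add: eval_nat_numeral W_Suc' W_0)
  finally show ?thesis .
qed

lemma Wrs_ge:
  assumes "\<And>a b. \<bar>a\<bar> + \<bar>b\<bar> \<le> int s \<Longrightarrow> (a + b) mod 2 = int s mod 2 \<Longrightarrow> m \<le> W r (a,b)"
  shows "m \<le> Wrs r s"
  unfolding Wrs_def
proof (rule Min.boundedI)
  show "finite (W r ` {(a,b). \<bar>a\<bar> + \<bar>b\<bar> \<le> int s \<and> (a + b) mod 2 = int s mod 2})"
    using finite_box by blast
  have "(int s, 0) \<in> {(a,b). \<bar>a\<bar> + \<bar>b\<bar> \<le> int s \<and> (a + b) mod 2 = int s mod 2}" by simp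
  thus "W r ` {(a,b). \<bar>a\<bar> + \<bar>b\<bar> \<le> int s \<and> (a + b) mod 2 = int s mod 2} \<noteq> {}" by blast
qed (use assms in auto)

lemma small_int: "\<bar>a\<bar> \<le> 2 \<Longrightarrow> a = -2 \<or> a = -1 \<or> a = 0 \<or> a = 1 \<or> a = (2::int)"
  by arith

definition pts :: "pt set" where
  "pts = {(-2,0), (-1,-1), (-1,0), (-1,1), (0,-2), (0,-1), (0,0), (0,1), (0,2), (1,-1), (1,0), (1,1), (2,0)}"

lemma small_mem:
  assumes "\<bar>a\<bar> + \<bar>b\<bar> \<le> (2::int)"
  shows "(a,b) \<in> pts"
proof -
  have "\<bar>a\<bar> \<le> 2" "\<bar>b\<bar> \<le> 2" using assms by arith+
  with small_int[OF this(1)] small_int[OF this(2)] assms show ?thesis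
    unfolding pts_def by (elim disjE) simp_all
qed

lemma Wrs_ge2:
  assumes "s \<le> 2" "\<forall>z\<in>pts. \<bar>fst z\<bar> + \<bar>snd z\<bar> \<le> int s \<longrightarrow> (fst z + snd z) mod 2 = int s mod 2 \<longrightarrow> m \<le> W r z"
  shows "m \<le> Wrs r s"
proof (rule Wrs_ge)
  fix a b assume h: "\<bar>a\<bar> + \<bar>b\<bar> \<le> int s" "(a + b) mod 2 = int s mod 2"
  hence "(a,b) \<in> pts" using assms(1) by (intro small_mem) linarith
  with assms(2) h show "m \<le> W r (a,b)" by fastforce
qed

lemma Wrs00: "1 \<le> Wrs 0 0"
  by (rule Wrs_ge) (auto simp: W_0)
lemma Wrs20: "4 \<le> Wrs 2 0"
proof (rule Wrs_ge)
  fix a b :: int assume "\<bar>a\<bar> + \<bar>b\<bar> \<le> int 0"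
  hence "a = 0" "b = 0" by arith+
  thus "4 \<le> W 2 (a, b)" by (simp add: W_Suc' W_0 eval_nat_numeral)
qed
lemma Wrs40: "36 \<le> Wrs 4 0"
proof (rule Wrs_ge)
  fix a b :: int assume "\<bar>a\<bar> + \<bar>b\<bar> \<le> int 0"
  hence "a = 0" "b = 0" by arith+
  thus "36 \<le> W 4 (a, b)" by (simp add: W_Suc' W_0 eval_nat_numeral)
qed
lemma Wrs11: "1 \<le> Wrs 1 1"
  by (rule Wrs_ge2) (simp_all add: pts_def W_Suc' W_0)
lemma Wrs31: "9 \<le> Wrs 3 1"
  by (rule Wrs_ge2) (simp_all add: pts_def W_Suc' W_0 eval_nat_numeral)
lemma Wrs22: "1 \<le> Wrs 2 2"
  by (rule Wrs_ge2) (simp_all add: pts_def W_Suc' W_0 eval_nat_numeral)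

definition wv :: "nat \<Rightarrow> nat \<Rightarrow> real" where
  "wv r s = (if (r,s) = (0,0) then 1 else if (r,s) = (2,0) then 4 else if (r,s) = (4,0) then 36
     else if (r,s) = (1,1) then 1 else if (r,s) = (3,1) then 9 else if (r,s) = (2,2) then 1 else 0)"

lemma wv_le: "wv r s \<le> real (Wrs r s)"
  using Wrs00 Wrs20 Wrs40 Wrs11 Wrs31 Wrs22 by (auto simp: wv_def)

lemma four_div: "(4::nat) div 2 = 2" by simp

lemma LB4:
  assumes "0 \<le> p" "p \<le> 1"
  shows "LB 4 p \<ge> 1 + 1/4*p^2 + 1/2*p*(1-p) + 9/64*p^4 + 9/16*p^3*(1-p) + 3/8*p^2*(1-p)^2"
proof -
  have "(\<Sum>k=0..4 div 2. \<Sum>r=0..2*k. real ((2*k) choose r) * (1-p)^(2*k-r) * (p/4)^r * wv r (2*k-r))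
      \<le> LB 4 p"
    unfolding LB_def
    by (intro sum_mono mult_left_mono wv_le) (use assms in simp)
  moreover have "(\<Sum>k=0..4 div 2. \<Sum>r=0..2*k. real ((2*k) choose r) * (1-p)^(2*k-r) * (p/4)^r * wv r (2*k-r))
     = 1 + 1/4*p^2 + 1/2*p*(1-p) + 9/64*p^4 + 9/16*p^3*(1-p) + 3/8*p^2*(1-p)^2"
    apply (simp only: atLeast0AtMost four_div)
    apply (simp add: eval_nat_numeral wv_def)
    apply (simp add: field_simps power2_eq_square)
    done
  ultimately show ?thesis by linarith
qed

theorem proposition3:
  fixes \<tau> :: nat and p :: real
  assumes "\<tau> > 0" and "even \<tau>" and "0 \<le> p" and "p \<le> 1"
  shows "(R \<tau> p \<ge> (\<Sum>k=0..\<tau> div 2. \<Sum>r=0..2*k.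
            real ((2*k) choose r) * (1-p)^(2*k-r) * (p/4)^r * real (Wrs r (2*k-r)))) \<and>
         R 4 p = 1 + 1/4*p^2 + 1/2*p*(1-p) + 9/64*p^4 + 9/16*p^3*(1-p) + 3/8*p^2*(1-p)^2"
proof
  show "R \<tau> p \<ge> (\<Sum>k=0..\<tau> div 2. \<Sum>r=0..2*k.
            real ((2*k) choose r) * (1-p)^(2*k-r) * (p/4)^r * real (Wrs r (2*k-r)))"
    using R_lower[OF assms(3,4), of \<tau>] by (simp add: LB_def)
  show "R 4 p = 1 + 1/4*p^2 + 1/2*p*(1-p) + 9/64*p^4 + 9/16*p^3*(1-p) + 3/8*p^2*(1-p)^2"
    using R_lower[OF assms(3,4), of 4] R_upper[of 4 p] LB4[OF assms(3,4)] visits_x0[OF assms(3,4)]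
    by linarith
qed

end
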